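(* For $\beta\in(0,\tfrac14)$ and $\tau>0$, write $S=\sinh(2\tau)$, $C=\cosh(2\tau)$ and define $$\lambda_1^-(\beta,\tau)=\frac1\beta\Big[\frac{6S(1+C)}{(C-1)^2}-6\sqrt{\frac{S^2(1+C)^2}{(C-1)^4}-2\beta\frac{\cosh(4\tau)-C}{(C-1)^2}}\Big],\qquad \lambda_0^+(\beta,\tau)=\frac4\beta\,\frac{S}{1-C+\tau S}.$$ Then for every $\beta\in(0,\tfrac14)$ there are values $\tau^-,\tau^*,\tau^+>0$ such that $\lambda_0^+>\lambda_1^-$ at $\tau=\tau^-$, $\lambda_1^->\lambda_0^+$ at $\tau=\tau^+$, and $\lambda_1^-=\lambda_0^+$ at $\tau=\tau^*$.
   Context: These are, with $\beta=\alpha(1-\alpha)$, the smaller root of the $\ell=1$ eigenvalue equation and the positive $\ell=0$ eigenvalue for the fourth-order Steklov-type problem ($P_gu=0$, $B^1_gu=0$, $B^3_gu=\lambda u$) on the annulus $[0,\tau]\times\mathbb S^3$ with a radial conformally flat metric normalized so that $e^{3f(0)}=\alpha$, $e^{3f(\tau)}=1-\alpha$. *)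

theory Defs
  imports Complex_Main
begin

definition lambda1_minus :: "real \<Rightarrow> real \<Rightarrow> real" where
  "lambda1_minus \<beta> \<tau> =
     (let S = sinh (2*\<tau>); C = cosh (2*\<tau>) in
      (1/\<beta>) * (6*S*(1+C)/(C-1)^2
        - 6 * sqrt (S^2*(1+C)^2/(C-1)^4 - 2*\<beta>*(cosh (4*\<tau>) - C)/(C-1)^2)))"

definition lambda0_plus :: "real \<Rightarrow> real \<Rightarrow> real" where
  "lambda0_plus \<beta> \<tau> =
     (let S = sinh (2*\<tau>); C = cosh (2*\<tau>) in
      (4/\<beta>) * (S / (1 - C + \<tau>*S)))"

end

theory Submission imports Defs begin

lemma tc_pos: assumes "(t::real) > 0" shows "t * cosh t - sinh t > 0"
proof -
  have "(\<lambda>x. x * cosh x - sinh x) 0 < (\<lambda>x. x * cosh x - sinh x) t"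
  proof (rule DERIV_pos_imp_increasing_open[OF assms])
    fix x :: real assume "0 < x" "x < t"
    show "\<exists>y. DERIV (\<lambda>x. x * cosh x - sinh x) x :> y \<and> y > 0"
      by (rule exI[of _ "x * sinh x"]) (auto intro!: derivative_eq_intros simp: \<open>0 < x\<close>)
  next
    show "continuous_on {0..t} (\<lambda>x. x * cosh x - sinh x)"
      by (intro continuous_intros)
  qed
  then show ?thesis by simp
qed

lemma den_pos: assumes "(t::real) > 0" shows "1 - cosh (2*t) + t * sinh (2*t) > 0"
proof -
  have s: "sinh t > 0" using assms by simp
  have p: "cosh t ^ 2 = sinh t ^ 2 + 1" by (rule cosh_square_eq)
  have "1 - cosh (2*t) + t * sinh (2*t) = 2 * sinh t * (t * cosh t - sinh t)"
    unfolding sinh_double cosh_double using p by (simp add: algebra_simps power2_eq_square)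
  then show ?thesis using s tc_pos[OF assms] by simp
qed

lemma l0_eq: assumes "(t::real) > 0"
  shows "lambda0_plus b t = (4/b) * (cosh t / (t * cosh t - sinh t))"
proof -
  have s: "sinh t > 0" using assms by simp
  have p: "cosh t ^ 2 = sinh t ^ 2 + 1" by (rule cosh_square_eq)
  have "1 - cosh (2*t) + t * sinh (2*t) = 2 * sinh t * (t * cosh t - sinh t)"
    unfolding sinh_double cosh_double using p by (simp add: algebra_simps power2_eq_square)
  then show ?thesis unfolding lambda0_plus_def Let_def using s tc_pos[OF assms]
    by (simp add: sinh_double)
qed

lemma l1_eq: assumes "(t::real) > 0"
  shows "lambda1_minus b t = (1/b) * (6 * (cosh t ^ 3 / sinh t ^ 3)
     - 6 * sqrt ((cosh t ^ 3 / sinh t ^ 3)^2 - b * (3 + 4 * sinh t ^ 2) / sinh t ^ 2))"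
proof -
  define s where "s = sinh t"
  define c where "c = cosh t"
  have s: "s > 0" using assms by (simp add: s_def)
  have p: "c ^ 2 = s ^ 2 + 1" unfolding s_def c_def using cosh_square_eq[of t] by simp
  have S: "sinh (2*t) = 2*s*c" by (simp add: sinh_double s_def c_def)
  have C: "cosh (2*t) = 1 + 2 * s^2" using cosh_double[of t] p by (simp add: s_def c_def)
  have C4: "cosh (4*t) = (1 + 2 * s^2)^2 + (2*s*c)^2"
    using cosh_double[of "2*t"] S C by simp
  have e1: "6*(2*s*c)*(1+(1+2*s^2))/((1+2*s^2)-1)^2 = 6 * (c^3/s^3)"
    using s p by (simp add: field_simps power2_eq_square power3_eq_cube) 
  have e2: "(2*s*c)^2*(1+(1+2*s^2))^2/((1+2*s^2)-1)^4
      - 2*b*(((1 + 2 * s^2)^2 + (2*s*c)^2) - (1+2*s^2))/((1+2*s^2)-1)^2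
      = (c^3/s^3)^2 - b * (3 + 4 * s^2) / s^2"
    using s p by (simp add: field_simps power2_eq_square power3_eq_cube) algebra
  show ?thesis unfolding lambda1_minus_def Let_def S C C4 e1 e2
    by (simp add: s_def c_def)
qed

lemma sqrt_bounds: fixes a K :: real
  assumes "a > 0" "0 \<le> K" "K \<le> a^2"
  shows "K/(2*a) \<le> a - sqrt (a^2 - K)" "a - sqrt (a^2 - K) \<le> K/a"
proof -
  define D where "D = sqrt (a^2 - K)"
  have D0: "D \<ge> 0" unfolding D_def using assms by simp
  have D2: "D^2 = a^2 - K" unfolding D_def using assms by simp
  have Da: "D \<le> a" using D2 D0 assms by (smt (verit) power2_le_imp_le)
  have eq: "a - D = K/(a+D)" using D2 D0 assms by (simp add: field_simps power2_eq_square)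
  show "K/(2*a) \<le> a - sqrt (a^2 - K)" unfolding D_def[symmetric] eq
    using assms D0 Da by (intro divide_left_mono) auto
  show "a - sqrt (a^2 - K) \<le> K/a" unfolding D_def[symmetric] eq
    using assms D0 Da by (intro divide_left_mono) auto
qed

lemma K_le: fixes s c b :: real
  assumes "s > 0" "c > 0" "c^2 = s^2 + 1" "0 < b" "b < 1/4"
  shows "b * (3 + 4 * s^2) / s^2 \<le> (c^3/s^3)^2"
proof -
  have "b * (3 + 4 * s^2) * s^4 \<le> (3/4 + s^2) * s^4"
  proof (intro mult_right_mono)
    have "b * (3 + 4 * s^2) \<le> (1/4) * (3 + 4 * s^2)"
      using assms by (intro mult_right_mono) auto
    then show "b * (3 + 4 * s^2) \<le> 3/4 + s^2" by simp
  qed simp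
  also have "\<dots> \<le> (s^2+1)^3"
  proof -
    have e: "(s^2+1)^3 = (3/4+s^2)*s^4 + (9/4*s^4 + 3*s^2 + 1)"
      by algebra
    show ?thesis unfolding e by (simp add: add_nonneg_nonneg)
  qed
  also have "\<dots> = c^6"
  proof -
    have "c^6 = (c^2)^3" by (simp flip: power_mult)
    then show ?thesis using assms(3) by simp
  qed
  finally have "b * (3 + 4 * s^2) * s^4 \<le> c^6" .
  then have "b * (3 + 4 * s^2) * s^4 / s^6 \<le> c^6 / s^6"
    by (intro divide_right_mono) auto
  moreover have "b * (3 + 4 * s^2) * s^4 / s^6 = b * (3 + 4 * s^2) / s^2"
  proof -
    have "s^6 = s^2 * s^4" by (simp flip: power_add)
    then show ?thesis unfolding \<open>s^6 = s^2 * s^4\<close> using assms(1) by (intro nonzero_mult_divide_mult_cancel_right) simp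
  qed
  moreover have "(c^3/s^3)^2 = c^6/s^6" by (simp add: power_divide flip: power_mult)
  ultimately show ?thesis by simp
qed

lemma l1_bounds:
  assumes "(t::real) > 0" "0 < b" "b < 1/4"
  shows "lambda1_minus b t \<le> 6 * (3 + 4 * sinh t ^ 2) * sinh t / cosh t ^ 3"
        "3 * (3 + 4 * sinh t ^ 2) * sinh t / cosh t ^ 3 \<le> lambda1_minus b t"
proof -
  define s where "s = sinh t"
  define c where "c = cosh t"
  have s: "s > 0" using assms by (simp add: s_def)
  have c: "c > 0" by (simp add: c_def)
  have p: "c ^ 2 = s ^ 2 + 1" unfolding s_def c_def using cosh_square_eq[of t] by simp
  define a where "a = c^3/s^3"
  define K where "K = b * (3 + 4 * s^2) / s^2"
  have a: "a > 0" using s c by (simp add: a_def)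
  have K0: "K \<ge> 0" using assms s by (simp add: K_def)
  have Ka: "K \<le> a^2" unfolding K_def a_def using K_le[OF s c p assms(2,3)] .
  have l1: "lambda1_minus b t = (6/b) * (a - sqrt (a^2 - K))"
    unfolding l1_eq[OF assms(1)] a_def K_def s_def c_def by (simp add: algebra_simps)
  have KA: "K/a = b * ((3 + 4 * s^2) * s / c^3)" unfolding K_def a_def using s c
    by (simp add: field_simps power2_eq_square power3_eq_cube)
  have "lambda1_minus b t \<le> (6/b) * (K/a)" unfolding l1
    using sqrt_bounds(2)[OF a K0 Ka] assms by (intro mult_left_mono) auto
  also have "\<dots> = 6 * (3 + 4 * s^2) * s / c^3" unfolding KA using assms by simp
  finally show "lambda1_minus b t \<le> 6 * (3 + 4 * sinh t ^ 2) * sinh t / cosh t ^ 3"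
    by (simp add: s_def c_def)
  have h: "(6/b) * (K/(2*a)) = (3/b) * (K/a)" using a by (simp add: field_simps)
  have "3 * (3 + 4 * s^2) * s / c^3 = (6/b) * (K/(2*a))" unfolding h KA using assms by simp
  also have "\<dots> \<le> lambda1_minus b t" unfolding l1
    using sqrt_bounds(1)[OF a K0 Ka] assms by (intro mult_left_mono) auto
  finally show "3 * (3 + 4 * sinh t ^ 2) * sinh t / cosh t ^ 3 \<le> lambda1_minus b t"
    by (simp add: s_def c_def)
qed

lemma small_pt:
  assumes "0 < b" "b < 1/4"
  shows "lambda1_minus b (1/2) < lambda0_plus b (1/2)"
proof -
  define s where "s = sinh (1/2::real)"
  define c where "c = cosh (1/2::real)"
  have s: "s > 0" by (simp add: s_def)
  have c: "c > 0" by (simp add: c_def)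
  have sc: "s < c" by (simp add: s_def c_def sinh_less_cosh_real)
  have p: "c ^ 2 = s ^ 2 + 1" unfolding s_def c_def using cosh_square_eq[of "1/2::real"] by simp
  have "(3 + 4 * s^2) * s < (4 * c^2) * c"
    using p s sc c by (intro mult_le_less_imp_less) (auto simp: add_pos_nonneg)
  then have "6 * (3 + 4 * s^2) * s / c^3 < 24" using c
    by (simp add: field_simps power2_eq_square power3_eq_cube)
  then have "lambda1_minus b (1/2) < 24" using l1_bounds(1)[of "1/2" b] assms
    by (simp add: s_def c_def)
  also have "24 < 8 / b" using assms by (simp add: field_simps)
  also have "8/b \<le> (4/b) * (c / ((1/2) * c - s))"
  proof -
    have d: "(1/2) * c - s > 0" using tc_pos[of "1/2"] by (simp add: s_def c_def)
    have "2 \<le> c / ((1/2) * c - s)" using d s c by (simp add: field_simps)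
    then have "(4/b) * 2 \<le> (4/b) * (c / ((1/2) * c - s))" using assms by (intro mult_left_mono) auto
    then show ?thesis by simp
  qed
  also have "\<dots> = lambda0_plus b (1/2)" using l0_eq[of "1/2" b] by (simp add: s_def c_def)
  finally show ?thesis .
qed

lemma x_le_sinh: assumes "(x::real) \<ge> 0" shows "x \<le> sinh x"
  using real_le_x_sinh[OF assms] by (simp add: sinh_field_def exp_minus)

lemma large_pt:
  assumes "0 < b" "b < 1/4"
  shows "lambda0_plus b (4/b) < lambda1_minus b (4/b)"
proof -
  define t where "t = 4/b"
  have t: "t > 0" using assms by (simp add: t_def)
  define s where "s = sinh t"
  define c where "c = cosh t"
  have s: "s > 0" using t by (simp add: s_def)
  have c: "c > 0" by (simp add: c_def)
  have sc: "s < c" by (simp add: s_def c_def sinh_less_cosh_real)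
  have p: "c ^ 2 = s ^ 2 + 1" unfolding s_def c_def using cosh_square_eq[of t] by simp
  have "16 \<le> t" using assms by (simp add: t_def field_simps)
  then have s1: "s \<ge> 1/2" using x_le_sinh[of t] t by (simp add: s_def)
  have X0: "(3 + 4 * s^2) * s \<ge> 0" using s by (simp add: add_pos_nonneg)
  have "(c^3)^2 \<le> ((3 + 4 * s^2) * s)^2"
  proof -
    have e1: "(c^3)^2 = (s^2+1)^3"
    proof -
      have "(c^3)^2 = (c^2)^3" by (simp flip: power_mult)
      then show ?thesis using p by simp
    qed
    have q: "s^2 \<ge> 1/4" using s1 power_mono[OF s1, of 2] by (simp add: power2_eq_square)
    have e2: "((3 + 4 * s^2) * s)^2 = (s^2+1)^3 + (15*(s^2)^3 + 21*(s^2)^2 + 6*s^2 - 1)"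
      by (simp add: algebra_simps power2_eq_square power3_eq_cube)
    have "0 \<le> 15*(s^2)^3 + 21*(s^2)^2" by simp
    then have "0 \<le> 15*(s^2)^3 + 21*(s^2)^2 + 6*s^2 - 1" using q by linarith
    then show ?thesis unfolding e1 e2 by simp
  qed
  then have "c^3 \<le> (3 + 4 * s^2) * s" using X0 by (rule power2_le_imp_le)
  then have "1 \<le> (3 + 4 * s^2) * s / c^3" using c by simp
  moreover have "3 * ((3 + 4 * s^2) * s / c^3) \<le> lambda1_minus b t"
    using l1_bounds(2)[OF t assms] unfolding s_def c_def by (simp add: algebra_simps)
  ultimately have "3 \<le> lambda1_minus b t" by linarith
  moreover have "lambda0_plus b t < 3"
  proof -
    have d: "t * c - s > 0" using tc_pos[OF t] by (simp add: s_def c_def)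
    have e0: "lambda0_plus b t = (4/b) * (c / (t * c - s))"
      using l0_eq[OF t] by (simp add: s_def c_def)
    have "t * c - s = (4 * c - b * s) / b" using assms by (simp add: t_def field_simps)
    then have e: "lambda0_plus b t = (4/b) * (c / ((4 * c - b * s) / b))"
      unfolding e0 by simp
    also have "\<dots> = 4 * c / (4 * c - b * s)" using assms(1) by simp
    finally have e: "lambda0_plus b t = 4 * c / (4 * c - b * s)" .
    have "b * s < 1 * s" using assms s by (intro mult_strict_right_mono) auto
    then have "b * s < c" using sc by linarith
    then have "4 * c < 3 * (4 * c - b * s)" using c by simp
    then show ?thesis unfolding e using \<open>b * s < c\<close> c by (simp add: field_simps)
  qed
  ultimately show ?thesis by (simp add: t_def)
qed

lemma cont_diff:
  assumes "0 < b" "0 < a"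
  shows "continuous_on {a..d} (\<lambda>x. lambda1_minus b x - lambda0_plus b x)"
proof -
  have c1: "cosh (2*x) - 1 \<noteq> 0" if "x \<in> {a..d}" for x :: real
    using that assms by auto
  have c2: "1 - cosh (2*x) + x * sinh (2*x) \<noteq> 0" if "x \<in> {a..d}" for x :: real
    using den_pos[of x] that assms by auto
  show ?thesis unfolding lambda1_minus_def lambda0_plus_def Let_def
    using c1 c2 assms by (intro continuous_intros) auto
qed

theorem proposition5p6:
  fixes \<beta> :: real
  assumes "0 < \<beta>" and "\<beta> < 1/4"
  shows "\<exists>\<tau>m \<tau>s \<tau>p. 0 < \<tau>m \<and> 0 < \<tau>s \<and> 0 < \<tau>p \<and>
           lambda0_plus \<beta> \<tau>m > lambda1_minus \<beta> \<tau>m \<and>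
           lambda1_minus \<beta> \<tau>p > lambda0_plus \<beta> \<tau>p \<and>
           lambda1_minus \<beta> \<tau>s = lambda0_plus \<beta> \<tau>s"
proof -
  let ?f = "\<lambda>x. lambda1_minus \<beta> x - lambda0_plus \<beta> x"
  have sm: "lambda1_minus \<beta> (1/2) < lambda0_plus \<beta> (1/2)" using small_pt assms .
  have lg: "lambda0_plus \<beta> (4/\<beta>) < lambda1_minus \<beta> (4/\<beta>)" using large_pt assms .
  have le: "1/2 \<le> 4/\<beta>" using assms by (simp add: field_simps)
  obtain x where x: "1/2 \<le> x" "x \<le> 4/\<beta>" "?f x = 0"
    using IVT'[of ?f "1/2" 0 "4/\<beta>", OF _ _ le cont_diff] sm lg assms by force
  show ?thesis
    apply (rule exI[of _ "1/2"], rule exI[of _ x], rule exI[of _ "4/\<beta>"])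
    using x sm lg assms by auto
qed

end
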